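(* Let $\mathcal{M}=(\mathcal{M}_t)_{t\ge0}$ be a smooth Mallows process on $\mathcal{S}_n$. Then $\mathcal{G}_\mathcal{M}$ is a subgraph of $\mathcal{H}_n$, and $\mathcal{T}^a\subseteq\langle\mathcal{G}_\mathcal{M}\rangle\subseteq\mathcal{T}$. Moreover, if $\mathcal{M}$ is regular, then $\mathcal{G}_\mathcal{M}=\mathcal{H}_n$ and $\langle\mathcal{G}_\mathcal{M}\rangle=\langle\mathcal{H}_n\rangle=\mathcal{T}$.
   Context: $\mathcal{S}_n$, $\mathrm{Inv}$, $\mathrm{Inv}_j$ as usual: $\mathrm{Inv}(\sigma)=|\{i<j:\sigma(i)>\sigma(j)\}|$, $\mathrm{Inv}_j(\sigma)=|\{i\in[j-1]:\sigma(i)>\sigma(j)\}|$. Composition: $(\sigma\cdot\sigma')(i)=\sigma(\sigma'(i))$. The Mallows distribution $\pi_{n,q}(\sigma)=q^{\mathrm{Inv}(\sigma)}/\prod_{k=1}^n\sum_{\ell=0}^{k-1}q^\ell$ ($0^0=1$). A Mallows process is an $\mathcal{S}_n$-valued càdlàg process with $\mathcal{M}_t\sim\pi_{n,t}$ for all $t\ge0$. It is strongly monotone if $t\mapsto\mathrm{Inv}_j(\mathcal{M}_t)$ is nondecreasing for each $j\in[n]$; smooth if strongly monotone and $\mathrm{Inv}(\mathcal{M}_t)\le\mathrm{Inv}(\mathcal{M}_{t-})+1$ for all $t$; regular if smooth and the processes $(\mathrm{Inv}_j(\mathcal{M}_t))_{t\ge0}$, $j\in[n]$, are mutually independent. The transition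 graph $\mathcal{G}_\mathcal{M}$ is the undirected graph on $\mathcal{S}_n$ with edge set $\{(\sigma,\sigma'):\mathbb{P}(\exists t\in(0,\infty):\mathcal{M}_{t-}=\sigma,\mathcal{M}_t=\sigma')>0\}$. For a graph $\mathcal{G}$ on $\mathcal{S}_n$, its generator is $\langle\mathcal{G}\rangle=\{\sigma^{-1}\cdot\sigma':(\sigma,\sigma')\in E(\mathcal{G})\}$. $\mathcal{T}$ is the set of all transpositions $(i\,j)$, $i\ne j$, and $\mathcal{T}^a=\{(i\,i{+}1):i\in[n-1]\}$ the adjacent transpositions. The expanded hypercube $\mathcal{H}_n$ is the graph on $\mathcal{S}_n$ with edges $\{(\sigma,\sigma'):\sum_{j=1}^n|\mathrm{Inv}_j(\sigma)-\mathrm{Inv}_j(\sigma')|=1\}$. *)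

theory Defs
  imports "HOL-Probability.Probability" "HOL-Combinatorics.Combinatorics"
begin

type_synonym perm_n = "nat \<Rightarrow> nat"

definition Sn :: "nat \<Rightarrow> perm_n set" where
  "Sn n = {\<sigma>. \<sigma> permutes {1..n}}"

definition Inv :: "nat \<Rightarrow> perm_n \<Rightarrow> nat" where
  "Inv n \<sigma> = card {(i, j). 1 \<le> i \<and> i < j \<and> j \<le> n \<and> \<sigma> i > \<sigma> j}"

definition Inv_j :: "perm_n \<Rightarrow> nat \<Rightarrow> nat" where
  "Inv_j \<sigma> j = card {i \<in> {1..<j}. \<sigma> i > \<sigma> j}"

text \<open>Mallows distribution; note 0 ^ 0 = 1 in Isabelle.\<close>
definition mallows :: "nat \<Rightarrow> real \<Rightarrow> perm_n \<Rightarrow> real" where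
  "mallows n q \<sigma> = q ^ Inv n \<sigma> / (\<Prod>k=1..n. \<Sum>l<k. q ^ l)"

definition left_lim :: "(real \<Rightarrow> 'b) \<Rightarrow> real \<Rightarrow> 'b \<Rightarrow> bool" where
  "left_lim f t s \<longleftrightarrow> (\<exists>\<delta>>0. \<forall>u. t - \<delta> < u \<and> u < t \<longrightarrow> f u = s)"

definition cadlag :: "(real \<Rightarrow> 'b) \<Rightarrow> bool" where
  "cadlag f \<longleftrightarrow>
     (\<forall>t\<ge>0. \<exists>\<delta>>0. \<forall>u. t \<le> u \<and> u < t + \<delta> \<longrightarrow> f u = f t) \<and>
     (\<forall>t>0. \<exists>s. left_lim f t s)"

definition mallows_process ::
  "'a measure \<Rightarrow> nat \<Rightarrow> (real \<Rightarrow> 'a \<Rightarrow> perm_n) \<Rightarrow> bool" where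
  "mallows_process P n M \<longleftrightarrow>
     prob_space P \<and>
     (\<forall>\<omega>\<in>space P. cadlag (\<lambda>t. M t \<omega>)) \<and>
     (\<forall>t\<ge>0. \<forall>\<omega>\<in>space P. M t \<omega> \<in> Sn n) \<and>
     (\<forall>t\<ge>0. \<forall>\<sigma>\<in>Sn n. {\<omega>\<in>space P. M t \<omega> = \<sigma>} \<in> sets P \<and>
        measure P {\<omega>\<in>space P. M t \<omega> = \<sigma>} = mallows n t \<sigma>)"

definition strongly_monotone ::
  "'a measure \<Rightarrow> nat \<Rightarrow> (real \<Rightarrow> 'a \<Rightarrow> perm_n) \<Rightarrow> bool" where
  "strongly_monotone P n M \<longleftrightarrow> mallows_process P n M \<and>
     (\<forall>\<omega>\<in>space P. \<forall>j\<in>{1..n}. \<forall>s t. 0 \<le> s \<and> s \<le> t \<longrightarrow>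
        Inv_j (M s \<omega>) j \<le> Inv_j (M t \<omega>) j)"

definition smooth ::
  "'a measure \<Rightarrow> nat \<Rightarrow> (real \<Rightarrow> 'a \<Rightarrow> perm_n) \<Rightarrow> bool" where
  "smooth P n M \<longleftrightarrow> strongly_monotone P n M \<and>
     (\<forall>\<omega>\<in>space P. \<forall>t>0. \<forall>\<sigma>. left_lim (\<lambda>u. M u \<omega>) t \<sigma> \<longrightarrow>
        Inv n (M t \<omega>) \<le> Inv n \<sigma> + 1)"

definition regular ::
  "'a measure \<Rightarrow> nat \<Rightarrow> (real \<Rightarrow> 'a \<Rightarrow> perm_n) \<Rightarrow> bool" where
  "regular P n M \<longleftrightarrow> smooth P n M \<and>
     prob_space.indep_vars P (\<lambda>j. PiM {0..} (\<lambda>t. count_space UNIV))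
       (\<lambda>j \<omega>. restrict (\<lambda>t. Inv_j (M t \<omega>) j) {0..}) {1..n}"

text \<open>A pair is an
  edge iff a jump (in either direction) between the two distinct permutations
  occurs with positive (outer) probability, i.e. the event is not P-null.\<close>
definition jump_event :: "'a measure \<Rightarrow> (real \<Rightarrow> 'a \<Rightarrow> perm_n) \<Rightarrow> perm_n \<Rightarrow> perm_n \<Rightarrow> bool" where
  "jump_event P M \<sigma> \<sigma>' \<longleftrightarrow>
     \<not> (AE \<omega> in P. \<not> (\<exists>t>0. left_lim (\<lambda>u. M u \<omega>) t \<sigma> \<and> M t \<omega> = \<sigma>'))"

definition trans_graph :: "'a measure \<Rightarrow> (real \<Rightarrow> 'a \<Rightarrow> perm_n) \<Rightarrow> (perm_n \<times> perm_n) set" where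
  "trans_graph P M = {(\<sigma>, \<sigma>'). \<sigma> \<noteq> \<sigma>' \<and> (jump_event P M \<sigma> \<sigma>' \<or> jump_event P M \<sigma>' \<sigma>)}"

definition hypercube :: "nat \<Rightarrow> (perm_n \<times> perm_n) set" where
  "hypercube n = {(\<sigma>, \<sigma>'). \<sigma> \<in> Sn n \<and> \<sigma>' \<in> Sn n \<and>
      (\<Sum>j=1..n. \<bar>int (Inv_j \<sigma> j) - int (Inv_j \<sigma>' j)\<bar>) = 1}"

definition generator :: "(perm_n \<times> perm_n) set \<Rightarrow> perm_n set" where
  "generator E = {inv \<sigma> \<circ> \<sigma>' | \<sigma> \<sigma>'. (\<sigma>, \<sigma>') \<in> E}"

definition transpositions :: "nat \<Rightarrow> perm_n set" where
  "transpositions n = {Transposition.transpose i j | i j. i \<in> {1..n} \<and> j \<in> {1..n} \<and> i \<noteq> j}"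

definition adj_transpositions :: "nat \<Rightarrow> perm_n set" where
  "adj_transpositions n = {Transposition.transpose i (i + 1) | i. 1 \<le> i \<and> i + 1 \<le> n}"

end

theory Submission
  imports Defs
begin


lemma perm_inj: "\<sigma> permutes S \<Longrightarrow> \<sigma> x = \<sigma> y \<longleftrightarrow> x = y"
  by (meson permutes_inj injD)

lemma order_code:
  assumes p: "\<sigma> permutes {1..n}" and ab: "a < b" "1 \<le> a"
  shows "\<sigma> a > \<sigma> b \<longleftrightarrow> card {k\<in>{1..<b}. \<sigma> k > \<sigma> a} < Inv_j \<sigma> b"
proof
  assume h: "\<sigma> a > \<sigma> b"
  have "{k\<in>{1..<b}. \<sigma> k > \<sigma> a} \<subset> {k\<in>{1..<b}. \<sigma> k > \<sigma> b}"
    using h ab by auto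
  then show "card {k\<in>{1..<b}. \<sigma> k > \<sigma> a} < Inv_j \<sigma> b"
    unfolding Inv_j_def by (intro psubset_card_mono) auto
next
  assume h: "card {k\<in>{1..<b}. \<sigma> k > \<sigma> a} < Inv_j \<sigma> b"
  show "\<sigma> a > \<sigma> b"
  proof (rule ccontr)
    assume "\<not> \<sigma> a > \<sigma> b"
    then have "{k\<in>{1..<b}. \<sigma> k > \<sigma> b} \<subseteq> {k\<in>{1..<b}. \<sigma> k > \<sigma> a}" by auto
    then have "Inv_j \<sigma> b \<le> card {k\<in>{1..<b}. \<sigma> k > \<sigma> a}"
      unfolding Inv_j_def by (intro card_mono) auto
    with h show False by simp
  qed
qed

lemma perm_val_card:
  assumes p: "\<sigma> permutes {1..n}" and a: "a \<in> {1..n}"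
  shows "\<sigma> a = card {k\<in>{1..n}. \<sigma> k < \<sigma> a} + 1"
proof -
  have hv: "\<And>x. x \<in> {1..n} \<Longrightarrow> \<sigma> x \<in> {1..n}" using p by (metis permutes_in_image)
  have sa: "\<sigma> a \<in> {1..n}" using hv a by blast
  have "\<sigma> ` {k\<in>{1..n}. \<sigma> k < \<sigma> a} = {1..<\<sigma> a}"
  proof
    show "\<sigma> ` {k\<in>{1..n}. \<sigma> k < \<sigma> a} \<subseteq> {1..<\<sigma> a}"
      using hv sa by fastforce
    show "{1..<\<sigma> a} \<subseteq> \<sigma> ` {k\<in>{1..n}. \<sigma> k < \<sigma> a}"
    proof
      fix v assume v: "v \<in> {1..<\<sigma> a}"
      then have "v \<in> {1..n}" using sa by auto
      then obtain k where "k \<in> {1..n}" "\<sigma> k = v"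
        using p by (metis permutes_image image_iff)
      then show "v \<in> \<sigma> ` {k\<in>{1..n}. \<sigma> k < \<sigma> a}" using v by auto
    qed
  qed
  moreover have "inj_on \<sigma> {k\<in>{1..n}. \<sigma> k < \<sigma> a}"
    using p by (meson permutes_inj inj_on_subset subset_UNIV)
  ultimately have "card {k\<in>{1..n}. \<sigma> k < \<sigma> a} = \<sigma> a - 1"
    by (metis card_atLeastLessThan card_image)
  then show ?thesis using sa by auto
qed

lemma code_inj:
  assumes p: "\<sigma> permutes {1..n}" and p': "\<sigma>' permutes {1..n}"
    and c: "\<And>j. j \<in> {1..n} \<Longrightarrow> Inv_j \<sigma> j = Inv_j \<sigma>' j"
  shows "\<sigma> = \<sigma>'"
proof -
  have step1: "\<forall>a. 1 \<le> a \<and> a < b \<longrightarrow> (\<sigma> a > \<sigma> b \<longleftrightarrow> \<sigma>' a > \<sigma>' b)" if "b \<le> n" for b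
    using that
  proof (induction b rule: less_induct)
    case (less b)
    show ?case
    proof (intro allI impI)
      fix a assume a: "1 \<le> a \<and> a < b"
      have eq: "{k\<in>{1..<b}. \<sigma> k > \<sigma> a} = {k\<in>{1..<b}. \<sigma>' k > \<sigma>' a}"
      proof (intro Collect_cong conj_cong refl)
        fix k assume k: "k \<in> {1..<b}"
        consider "k = a" | "k < a" | "a < k" by linarith
        then show "\<sigma> k > \<sigma> a \<longleftrightarrow> \<sigma>' k > \<sigma>' a"
        proof cases
          case 2 then show ?thesis using less.IH[of a] a k less.prems by auto
        next
          case 3
          have "\<sigma> a > \<sigma> k \<longleftrightarrow> \<sigma>' a > \<sigma>' k" using less.IH[of k] a k less.prems 3 by auto
          moreover have "\<sigma> a \<noteq> \<sigma> k" "\<sigma>' a \<noteq> \<sigma>' k"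
            using 3 perm_inj[OF p] perm_inj[OF p'] by auto
          ultimately show ?thesis by auto
        qed simp
      qed
      have "b \<in> {1..n}" using a less.prems by auto
      then show "\<sigma> a > \<sigma> b \<longleftrightarrow> \<sigma>' a > \<sigma>' b"
        using order_code[OF p, of a b] order_code[OF p', of a b] a eq c[of b] by simp
    qed
  qed
  have step2: "\<sigma> a < \<sigma> b \<longleftrightarrow> \<sigma>' a < \<sigma>' b" if "a \<in> {1..n}" "b \<in> {1..n}" for a b
  proof -
    consider "a = b" | "a < b" | "b < a" by linarith
    then show ?thesis
    proof cases
      case 2
      have "\<sigma> a \<noteq> \<sigma> b" "\<sigma>' a \<noteq> \<sigma>' b" using 2 perm_inj[OF p] perm_inj[OF p'] by auto
      then show ?thesis using step1[of b] that 2 by auto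
    next
      case 3 then show ?thesis using step1[of a] that by auto
    qed simp
  qed
  show ?thesis
  proof
    fix a
    show "\<sigma> a = \<sigma>' a"
    proof (cases "a \<in> {1..n}")
      case True
      have "{k\<in>{1..n}. \<sigma> k < \<sigma> a} = {k\<in>{1..n}. \<sigma>' k < \<sigma>' a}"
        using step2 True by auto
      then show ?thesis using perm_val_card[OF p True] perm_val_card[OF p' True] by simp
    next
      case False then show ?thesis using p p' by (simp add: permutes_not_in)
    qed
  qed
qed

lemma swap_code:
  assumes p: "\<sigma> permutes {1..n}" and pj: "1 \<le> p" "p < j" "j \<le> n" and lt: "\<sigma> p < \<sigma> j"
    and nb: "\<And>k. 1 \<le> k \<Longrightarrow> k < j \<Longrightarrow> k \<noteq> p \<Longrightarrow> \<not> (\<sigma> p < \<sigma> k \<and> \<sigma> k < \<sigma> j)"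
  shows "Inv_j (\<sigma> \<circ> Transposition.transpose p j) m = (if m = j then Inv_j \<sigma> m + 1 else Inv_j \<sigma> m)"
proof -
  define t where "t = Transposition.transpose p j"
  have tp: "t p = j" and tj: "t j = p" and tk: "\<And>k. k \<noteq> p \<Longrightarrow> k \<noteq> j \<Longrightarrow> t k = k"
    unfolding t_def by auto
  have bt: "(\<sigma> k > \<sigma> j \<longleftrightarrow> \<sigma> k > \<sigma> p) \<and> (\<sigma> j > \<sigma> k \<longleftrightarrow> \<sigma> p > \<sigma> k)"
    if "1 \<le> k" "k < j" "k \<noteq> p" for k
  proof -
    have "\<sigma> k \<noteq> \<sigma> p" "\<sigma> k \<noteq> \<sigma> j" using that perm_inj[OF p] by auto
    then show ?thesis using nb[OF that] lt by auto
  qed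
  consider "m < p" | "m = p" | "p < m \<and> m < j" | "m = j" | "j < m" by linarith
  then show ?thesis
  proof cases
    case 1
    have "{k\<in>{1..<m}. (\<sigma> \<circ> t) k > (\<sigma> \<circ> t) m} = {k\<in>{1..<m}. \<sigma> k > \<sigma> m}"
      using 1 pj tk by auto
    then show ?thesis using 1 pj unfolding Inv_j_def t_def[symmetric] by simp
  next
    case 2
    have "{k\<in>{1..<m}. (\<sigma> \<circ> t) k > (\<sigma> \<circ> t) m} = {k\<in>{1..<m}. \<sigma> k > \<sigma> m}"
      using 2 pj tk tp bt by auto
    then show ?thesis using 2 pj unfolding Inv_j_def t_def[symmetric] by simp
  next
    case 3
    have "{k\<in>{1..<m}. (\<sigma> \<circ> t) k > (\<sigma> \<circ> t) m} = {k\<in>{1..<m}. \<sigma> k > \<sigma> m}"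
    proof (intro Collect_cong conj_cong refl)
      fix k assume k: "k \<in> {1..<m}"
      have tm: "(\<sigma> \<circ> t) m = \<sigma> m" using 3 tk by simp
      show "(\<sigma> \<circ> t) k > (\<sigma> \<circ> t) m \<longleftrightarrow> \<sigma> k > \<sigma> m"
      proof (cases "k = p")
        case True
        have "1 \<le> m" "m < j" "m \<noteq> p" using 3 pj by auto
        from bt[OF this] show ?thesis using True tp tm by simp
      next
        case False then show ?thesis using tk[of k] tm k 3 by simp
      qed
    qed
    then show ?thesis using 3 pj unfolding Inv_j_def t_def[symmetric] by simp
  next
    case 4
    have "{k\<in>{1..<m}. (\<sigma> \<circ> t) k > (\<sigma> \<circ> t) m} = insert p {k\<in>{1..<m}. \<sigma> k > \<sigma> m}"
    proof (intro set_eqI iffI)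
      fix k assume k: "k \<in> {k\<in>{1..<m}. (\<sigma> \<circ> t) k > (\<sigma> \<circ> t) m}"
      show "k \<in> insert p {k\<in>{1..<m}. \<sigma> k > \<sigma> m}"
      proof (cases "k = p")
        case False
        then show ?thesis using k bt[of k] tk[of k] tj 4 by auto
      qed simp
    next
      fix k assume k: "k \<in> insert p {k\<in>{1..<m}. \<sigma> k > \<sigma> m}"
      show "k \<in> {k\<in>{1..<m}. (\<sigma> \<circ> t) k > (\<sigma> \<circ> t) m}"
      proof (cases "k = p")
        case True then show ?thesis using 4 pj tp tj lt by auto
      next
        case False
        then show ?thesis using k bt[of k] tk[of k] tj 4 by auto
      qed
    qed
    moreover have "p \<notin> {k\<in>{1..<m}. \<sigma> k > \<sigma> m}" using lt 4 by auto
    ultimately show ?thesis using 4 unfolding Inv_j_def t_def[symmetric] by simp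
  next
    case 5
    have tm: "(\<sigma> \<circ> t) m = \<sigma> m" using 5 pj tk by simp
    have tt: "t (t k) = k" for k unfolding t_def by simp
    have "{k\<in>{1..<m}. (\<sigma> \<circ> t) k > (\<sigma> \<circ> t) m} = t ` {k\<in>{1..<m}. \<sigma> k > \<sigma> m}"
    proof (intro set_eqI iffI)
      fix k assume k: "k \<in> {k\<in>{1..<m}. (\<sigma> \<circ> t) k > (\<sigma> \<circ> t) m}"
      have "t k \<in> {k\<in>{1..<m}. \<sigma> k > \<sigma> m}"
        using k tm 5 pj tp tj tk[of k] by (cases "k = p"; cases "k = j") auto
      then show "k \<in> t ` {k\<in>{1..<m}. \<sigma> k > \<sigma> m}" using tt[of k] by (metis image_eqI)
    next
      fix k assume "k \<in> t ` {k\<in>{1..<m}. \<sigma> k > \<sigma> m}"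
      then obtain k' where k': "k' \<in> {k\<in>{1..<m}. \<sigma> k > \<sigma> m}" "k = t k'" by auto
      then show "k \<in> {k\<in>{1..<m}. (\<sigma> \<circ> t) k > (\<sigma> \<circ> t) m}"
        using tm 5 pj tp tj tk[of k'] tt[of k'] by (cases "k' = p"; cases "k' = j") auto
    qed
    moreover have "inj t" unfolding t_def by simp
    ultimately show ?thesis using 5 unfolding Inv_j_def t_def[symmetric]
      by (simp add: card_image inj_on_subset)
  qed
qed


definition succ_code :: "nat \<Rightarrow> perm_n \<Rightarrow> perm_n \<Rightarrow> nat \<Rightarrow> bool" where
  "succ_code n \<sigma> \<sigma>' j \<longleftrightarrow> (\<forall>m\<in>{1..n}. Inv_j \<sigma>' m = (if m = j then Inv_j \<sigma> m + 1 else Inv_j \<sigma> m))"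

lemma code_bound: "Inv_j \<sigma> j \<le> j - 1"
proof -
  have "Inv_j \<sigma> j \<le> card {1..<j}" unfolding Inv_j_def by (intro card_mono) auto
  then show ?thesis by simp
qed

lemma succ_structure:
  assumes p: "\<sigma> permutes {1..n}" and p': "\<sigma>' permutes {1..n}" and j: "j \<in> {1..n}"
    and sc: "succ_code n \<sigma> \<sigma>' j"
  shows "\<exists>q. 1 \<le> q \<and> q < j \<and> \<sigma>' = \<sigma> \<circ> Transposition.transpose q j"
proof -
  define L where "L = {k\<in>{1..<j}. \<sigma> k < \<sigma> j}"
  have ne: "\<sigma> k \<noteq> \<sigma> j" if "k < j" for k using that perm_inj[OF p, of k j] by auto
  have un: "{1..<j} = L \<union> {k\<in>{1..<j}. \<sigma> k > \<sigma> j}"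
  proof (intro set_eqI iffI)
    fix x assume x: "x \<in> {1..<j}"
    then have "\<sigma> x \<noteq> \<sigma> j" using ne by simp
    then have "\<sigma> x < \<sigma> j \<or> \<sigma> x > \<sigma> j" by (rule nat_neq_iff[THEN iffD1])
    then show "x \<in> L \<union> {k\<in>{1..<j}. \<sigma> k > \<sigma> j}"
      using x unfolding L_def by blast
  qed (auto simp: L_def)
  have "card {1..<j} = card (L \<union> {k\<in>{1..<j}. \<sigma> k > \<sigma> j})"
    by (rule arg_cong[OF un])
  also have "\<dots> = card L + card {k\<in>{1..<j}. \<sigma> k > \<sigma> j}"
    by (rule card_Un_disjoint) (auto simp: L_def)
  finally have "card {1..<j} = card L + Inv_j \<sigma> j" unfolding Inv_j_def .
  moreover have "Inv_j \<sigma>' j = Inv_j \<sigma> j + 1" using sc j unfolding succ_code_def by auto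
  moreover note code_bound[of \<sigma>' j]
  ultimately have "card L \<ge> 1" by simp
  then have Lne: "L \<noteq> {}" by (metis card.empty not_one_le_zero)
  have Lf: "finite L" by (simp add: L_def)
  define v where "v = Max (\<sigma> ` L)"
  have "v \<in> \<sigma> ` L" unfolding v_def using Lne Lf by (intro Max_in) auto
  then obtain q where q: "q \<in> L" "\<sigma> q = v" by auto
  have qmax: "\<sigma> k \<le> \<sigma> q" if "k \<in> L" for k using that q Lf unfolding v_def by auto
  have q1: "1 \<le> q" "q < j" "\<sigma> q < \<sigma> j" using q(1) unfolding L_def by auto
  have nb: "\<not> (\<sigma> q < \<sigma> k \<and> \<sigma> k < \<sigma> j)" if "1 \<le> k" "k < j" "k \<noteq> q" for k
    using qmax[of k] that unfolding L_def by auto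
  have jn: "j \<le> n" using j by auto
  note sw = swap_code[OF p q1(1,2) jn q1(3) nb]
  have "\<sigma> \<circ> Transposition.transpose q j permutes {1..n}"
    using q1 j by (intro permutes_compose[OF permutes_swap_id p]) auto
  moreover have "\<sigma>' = \<sigma> \<circ> Transposition.transpose q j"
    by (rule code_inj[OF p' calculation]) (use sc sw in \<open>auto simp: succ_code_def\<close>)
  then show ?thesis using q1 by auto
qed

lemma hyper_iff:
  assumes p: "\<sigma> \<in> Sn n" and p': "\<sigma>' \<in> Sn n"
  shows "(\<sigma>, \<sigma>') \<in> hypercube n \<longleftrightarrow> (\<exists>j\<in>{1..n}. succ_code n \<sigma> \<sigma>' j \<or> succ_code n \<sigma>' \<sigma> j)"
proof
  assume "\<exists>j\<in>{1..n}. succ_code n \<sigma> \<sigma>' j \<or> succ_code n \<sigma>' \<sigma> j"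
  then obtain j where j: "j \<in> {1..n}" and sc: "succ_code n \<sigma> \<sigma>' j \<or> succ_code n \<sigma>' \<sigma> j" by auto
  have "(\<Sum>m=1..n. \<bar>int (Inv_j \<sigma> m) - int (Inv_j \<sigma>' m)\<bar>) = (\<Sum>m=1..n. if m = j then 1 else 0)"
    using sc by (intro sum.cong refl) (auto simp: succ_code_def)
  also have "\<dots> = 1" using j by simp
  finally show "(\<sigma>, \<sigma>') \<in> hypercube n" using p p' unfolding hypercube_def by simp
next
  assume h: "(\<sigma>, \<sigma>') \<in> hypercube n"
  define d where "d m = \<bar>int (Inv_j \<sigma> m) - int (Inv_j \<sigma>' m)\<bar>" for m
  have s1: "(\<Sum>m=1..n. d m) = 1" using h unfolding hypercube_def d_def by simp
  have "\<exists>j\<in>{1..n}. d j \<noteq> 0"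
  proof (rule ccontr)
    assume "\<not> ?thesis"
    then have "(\<Sum>m=1..n. d m) = 0" by simp
    with s1 show False by simp
  qed
  then obtain j where j: "j \<in> {1..n}" "d j \<noteq> 0" by auto
  have "d j \<le> (\<Sum>m=1..n. d m)" using j by (intro member_le_sum) (auto simp: d_def)
  then have dj: "d j = 1" using j(2) s1 by (simp add: d_def)
  have "(\<Sum>m=1..n. d m) = d j + (\<Sum>m\<in>{1..n}-{j}. d m)"
    using j(1) by (simp add: sum.remove)
  then have "(\<Sum>m\<in>{1..n}-{j}. d m) = 0" using s1 dj by simp
  then have d0: "\<forall>m\<in>{1..n}-{j}. d m = 0"
    by (subst (asm) sum_nonneg_eq_0_iff) (auto simp: d_def)
  show "\<exists>j\<in>{1..n}. succ_code n \<sigma> \<sigma>' j \<or> succ_code n \<sigma>' \<sigma> j"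
  proof (intro bexI[OF _ j(1)])
    have oth: "\<forall>m\<in>{1..n}. m \<noteq> j \<longrightarrow> Inv_j \<sigma> m = Inv_j \<sigma>' m" using d0 by (auto simp: d_def)
    consider "Inv_j \<sigma>' j = Inv_j \<sigma> j + 1" | "Inv_j \<sigma> j = Inv_j \<sigma>' j + 1" using dj by (auto simp: d_def abs_if split: if_splits)
    then show "succ_code n \<sigma> \<sigma>' j \<or> succ_code n \<sigma>' \<sigma> j"
      by cases (auto simp: succ_code_def oth)
  qed
qed

lemma hyper_gen:
  assumes "(\<sigma>, \<sigma>') \<in> hypercube n"
  shows "inv \<sigma> \<circ> \<sigma>' \<in> transpositions n"
proof -
  have p: "\<sigma> permutes {1..n}" and p': "\<sigma>' permutes {1..n}" and s: "\<sigma> \<in> Sn n" "\<sigma>' \<in> Sn n"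
    using assms by (auto simp: hypercube_def Sn_def)
  from assms obtain j where j: "j \<in> {1..n}" and sc: "succ_code n \<sigma> \<sigma>' j \<or> succ_code n \<sigma>' \<sigma> j"
    using hyper_iff[OF s] by auto
  from sc show ?thesis
  proof
    assume "succ_code n \<sigma> \<sigma>' j"
    from succ_structure[OF p p' j this] obtain q where q: "1 \<le> q" "q < j" "\<sigma>' = \<sigma> \<circ> Transposition.transpose q j" by auto
    have "inv \<sigma> \<circ> \<sigma>' = Transposition.transpose q j"
      using q(3) permutes_inv_o(2)[OF p] by (simp add: o_assoc)
    then show ?thesis using q j unfolding transpositions_def by fastforce
  next
    assume "succ_code n \<sigma>' \<sigma> j"
    from succ_structure[OF p' p j this] obtain q where q: "1 \<le> q" "q < j" "\<sigma> = \<sigma>' \<circ> Transposition.transpose q j" by auto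
    have "inv \<sigma> = inv (Transposition.transpose q j) \<circ> inv \<sigma>'"
      using q(3) p' by (simp add: o_inv_distrib permutes_bij)
    then have "inv \<sigma> \<circ> \<sigma>' = Transposition.transpose q j"
      using permutes_inv_o(2)[OF p'] by (simp add: comp_assoc)
    then show ?thesis using q j unfolding transpositions_def by fastforce
  qed
qed

lemma gen_hyper: "generator (hypercube n) = transpositions n"
proof
  show "generator (hypercube n) \<subseteq> transpositions n"
    unfolding generator_def using hyper_gen by blast
  show "transpositions n \<subseteq> generator (hypercube n)"
  proof
    fix t assume "t \<in> transpositions n"
    then obtain i j where ij: "t = Transposition.transpose i j" "i \<in> {1..n}" "j \<in> {1..n}" "i \<noteq> j"
      unfolding transpositions_def by auto
    have "\<exists>a b. t = Transposition.transpose a b \<and> 1 \<le> a \<and> a < b \<and> b \<le> n"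
    proof (cases "i < j")
      case True then show ?thesis using ij by auto
    next
      case False then show ?thesis using ij by (intro exI[of _ j] exI[of _ i]) (auto simp: transpose_commute)
    qed
    then obtain a b where ab: "t = Transposition.transpose a b" "1 \<le> a" "a < b" "b \<le> n" by auto
    define \<sigma> where "\<sigma> = Transposition.transpose (a+1) b"
    have p: "\<sigma> permutes {1..n}" unfolding \<sigma>_def using ab by (intro permutes_swap_id) auto
    have sa: "\<sigma> a = a" "\<sigma> b = a + 1" unfolding \<sigma>_def using ab by auto
    have nb: "\<not> (\<sigma> a < \<sigma> k \<and> \<sigma> k < \<sigma> b)" if "1 \<le> k" "k < b" "k \<noteq> a" for k
    proof (cases "k = a + 1")
      case True
      then have "\<sigma> k = b" unfolding \<sigma>_def by simp
      then show ?thesis using sa by simp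
    next
      case False
      then have "\<sigma> k = k" unfolding \<sigma>_def using that by (simp add: transpose_def)
      then show ?thesis using sa False by simp
    qed
    note sw = swap_code[OF p ab(2,3,4) _ nb] 
    have p2: "\<sigma> \<circ> t permutes {1..n}" unfolding ab(1) using ab
      by (intro permutes_compose[OF permutes_swap_id p]) auto
    have "succ_code n \<sigma> (\<sigma> \<circ> t) b" using sw sa unfolding succ_code_def ab(1) by auto
    then have "(\<sigma>, \<sigma> \<circ> t) \<in> hypercube n"
      using hyper_iff[of \<sigma> n "\<sigma> \<circ> t"] p p2 ab by (auto simp: Sn_def)
    moreover have "t = inv \<sigma> \<circ> (\<sigma> \<circ> t)" using permutes_inv_o(2)[OF p] by (simp add: o_assoc)
    ultimately show "t \<in> generator (hypercube n)" unfolding generator_def by blast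
  qed
qed



lemma Inv_sum: "Inv n \<sigma> = (\<Sum>j=1..n. Inv_j \<sigma> j)"
proof -
  have "{(i, j). 1 \<le> i \<and> i < j \<and> j \<le> n \<and> \<sigma> i > \<sigma> j} =
        (\<lambda>(j,i). (i,j)) ` (SIGMA j:{1..n}. {i \<in> {1..<j}. \<sigma> i > \<sigma> j})"
    by (auto simp: image_iff)
  moreover have "inj_on (\<lambda>(j,i). (i,j)) (SIGMA j:{1..n}. {i \<in> {1..<j}. \<sigma> i > \<sigma> j})"
    by (auto simp: inj_on_def)
  ultimately show ?thesis unfolding Inv_def Inv_j_def
    by (simp add: card_image card_SigmaI)
qed

lemma crossing:
  fixes f :: "real \<Rightarrow> 'b" and g :: "'b \<Rightarrow> nat"
  assumes cad: "cadlag f" and a: "0 \<le> a" "a < b" and ga: "g (f a) \<le> c" and gb: "c < g (f b)"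
  shows "\<exists>s u. a \<le> u \<and> u < s \<and> s \<le> b \<and> left_lim f s (f u) \<and> g (f u) \<le> c \<and> c < g (f s)"
proof -
  define S where "S = {u\<in>{a..b}. g (f u) \<le> c}"
  have aS: "a \<in> S" using a ga by (auto simp: S_def)
  have bdd: "bdd_above S" unfolding bdd_above_def S_def by auto
  define s where "s = Sup S"
  have as: "a \<le> s" using cSup_upper[OF aS bdd] by (simp add: s_def)
  have sb: "s \<le> b" unfolding s_def using aS by (intro cSup_least) (auto simp: S_def)
  have gs: "c < g (f s)"
  proof (rule ccontr)
    assume "\<not> c < g (f s)"
    then have gsc: "g (f s) \<le> c" by simp
    then have "s \<noteq> b" using gb by auto
    with sb have sb': "s < b" by simp
    have "s \<ge> 0" using as a by simp
    with cad obtain \<delta> where \<delta>: "\<delta> > 0" "\<forall>u. s \<le> u \<and> u < s + \<delta> \<longrightarrow> f u = f s"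
      unfolding cadlag_def by blast
    define u where "u = min (s + \<delta>/2) b"
    have u1: "s < u" "u < s + \<delta>" "u \<le> b" using \<delta>(1) sb' by (auto simp: u_def)
    have fu: "f u = f s" using \<delta>(2) u1 less_imp_le by blast
    have "u \<in> S" using fu u1 gsc as unfolding S_def by simp
    then have "u \<le> s" using cSup_upper[OF _ bdd] s_def by simp
    then show False using u1 by simp
  qed
  have sa: "a < s" using as gs ga by (cases "a = s") auto
  have "0 < s" using sa a by simp
  then obtain \<sigma> where ll: "left_lim f s \<sigma>" using cad unfolding cadlag_def by blast
  then obtain \<delta> where \<delta>: "\<delta> > 0" "\<forall>u. s - \<delta> < u \<and> u < s \<longrightarrow> f u = \<sigma>" unfolding left_lim_def by auto
  define \<delta>' where "\<delta>' = min \<delta> (s - a)"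
  have "\<delta>' > 0" using \<delta> sa by (simp add: \<delta>'_def)
  then have "s - \<delta>' < Sup S" by (simp add: s_def[symmetric])
  then obtain u where u: "u \<in> S" "s - \<delta>' < u" using less_cSupD[of S] aS by blast
  have "u \<le> s" using cSup_upper[OF u(1) bdd] s_def by simp
  moreover have "u \<noteq> s" using u(1) gs by (auto simp: S_def)
  ultimately have us: "u < s" by simp
  have "s - \<delta> < u" using u(2) by (simp add: \<delta>'_def)
  then have fu: "f u = \<sigma>" using \<delta>(2) us by blast
  show ?thesis
    by (rule exI[of _ s], rule exI[of _ u]) (use u us sb fu ll gs in \<open>auto simp: S_def \<delta>'_def\<close>)
qed

lemma left_lim_point:
  assumes "left_lim f t \<sigma>" "t > 0" shows "\<exists>u. 0 < u \<and> u < t \<and> f u = \<sigma>"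
proof -
  from assms obtain \<delta> where \<delta>: "\<delta> > 0" "\<forall>u. t - \<delta> < u \<and> u < t \<longrightarrow> f u = \<sigma>" unfolding left_lim_def by auto
  define u where "u = max (t - \<delta>/2) (t/2)"
  have "0 < u" "u < t" "t - \<delta> < u" using \<delta> assms(2) by (auto simp: u_def)
  then show ?thesis using \<delta> by blast
qed

lemma denom_pos: "0 \<le> (t::real) \<Longrightarrow> 0 < (\<Prod>k=1..n. \<Sum>l<k. t ^ l)"
proof (intro prod_pos)
  fix k assume t: "0 \<le> t" and k: "k \<in> {1..n}"
  have "t ^ 0 \<le> (\<Sum>l<k. t ^ l)" using k t by (intro member_le_sum) auto
  then show "0 < (\<Sum>l<k. t ^ l)" by simp
qed

lemma mallows_pos: "0 < t \<Longrightarrow> 0 < mallows n t \<sigma>"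
  unfolding mallows_def using denom_pos[of t n] by simp

lemma mallows_nonneg: "0 \<le> t \<Longrightarrow> 0 \<le> mallows n t \<sigma>"
  unfolding mallows_def using denom_pos[of t n] by simp

lemma mallows_0_id: "mallows n 0 id = 1"
proof -
  have "Inv n id = 0" unfolding Inv_sum Inv_j_def by simp
  moreover have "(\<Sum>l<k. (0::real) ^ l) = 1" if "k \<in> {1..n}" for k
  proof -
    have "(\<Sum>l<k. (0::real) ^ l) = (\<Sum>l<k. if l = 0 then 1 else 0)"
      by (intro sum.cong) (auto simp: power_0_left)
    also have "\<dots> = 1" using that by (simp add: sum.delta)
    finally show ?thesis .
  qed
  ultimately show ?thesis unfolding mallows_def by simp
qed

lemma finite_Sn: "finite (Sn n)"
  unfolding Sn_def by (rule finite_permutations) simp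

lemma id_Sn: "id \<in> Sn n" unfolding Sn_def by simp

lemma mp_event:
  assumes mp: "mallows_process P n M" and t: "0 \<le> t"
  shows "{\<omega>\<in>space P. Q (M t \<omega>)} \<in> sets P \<and>
         measure P {\<omega>\<in>space P. Q (M t \<omega>)} = (\<Sum>\<rho>\<in>{\<rho>\<in>Sn n. Q \<rho>}. mallows n t \<rho>)"
proof -
  interpret prob_space P using mp by (simp add: mallows_process_def)
  define E where "E \<rho> = {\<omega>\<in>space P. M t \<omega> = \<rho>}" for \<rho>
  have E: "E \<rho> \<in> sets P \<and> measure P (E \<rho>) = mallows n t \<rho>" if "\<rho> \<in> Sn n" for \<rho>
    using mp t that unfolding mallows_process_def E_def by blast
  have in_Sn: "M t \<omega> \<in> Sn n" if "\<omega> \<in> space P" for \<omega>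
    using mp t that unfolding mallows_process_def by blast
  have eq: "{\<omega>\<in>space P. Q (M t \<omega>)} = (\<Union>\<rho>\<in>{\<rho>\<in>Sn n. Q \<rho>}. E \<rho>)"
    using in_Sn by (auto simp: E_def)
  have fin: "finite {\<rho>\<in>Sn n. Q \<rho>}" using finite_Sn by simp
  have "(\<Union>\<rho>\<in>{\<rho>\<in>Sn n. Q \<rho>}. E \<rho>) \<in> sets P" using fin E by (intro sets.finite_UN) auto
  moreover have "measure P (\<Union>\<rho>\<in>{\<rho>\<in>Sn n. Q \<rho>}. E \<rho>) = (\<Sum>\<rho>\<in>{\<rho>\<in>Sn n. Q \<rho>}. measure P (E \<rho>))"
    using fin E by (intro finite_measure_finite_Union) (auto simp: disjoint_family_on_def E_def)
  ultimately show ?thesis using E eq by simp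
qed

lemma jump_exists:
  assumes "jump_event P M \<sigma> \<sigma>'"
  shows "\<exists>\<omega>\<in>space P. \<exists>t>0. left_lim (\<lambda>u. M u \<omega>) t \<sigma> \<and> M t \<omega> = \<sigma>'"
proof (rule ccontr)
  assume "\<not> ?thesis"
  then have "AE \<omega> in P. \<not> (\<exists>t>0. left_lim (\<lambda>u. M u \<omega>) t \<sigma> \<and> M t \<omega> = \<sigma>')"
    by (intro AE_I2) auto
  with assms show False unfolding jump_event_def by simp
qed

lemma mono_succ:
  assumes mono: "\<forall>m\<in>{1..n}. Inv_j \<sigma> m \<le> Inv_j \<sigma>' m" and inv: "Inv n \<sigma>' \<le> Inv n \<sigma> + 1"
    and j: "j \<in> {1..n}" "Inv_j \<sigma> j < Inv_j \<sigma>' j"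
  shows "succ_code n \<sigma> \<sigma>' j"
proof -
  define D where "D m = Inv_j \<sigma>' m - Inv_j \<sigma> m" for m
  have D: "Inv_j \<sigma>' m = Inv_j \<sigma> m + D m" if "m \<in> {1..n}" for m using mono that by (auto simp: D_def)
  have "Inv n \<sigma>' = (\<Sum>m=1..n. Inv_j \<sigma> m + D m)" unfolding Inv_sum using D by (intro sum.cong) auto
  also have "\<dots> = Inv n \<sigma> + (\<Sum>m=1..n. D m)" unfolding Inv_sum by (simp add: sum.distrib)
  finally have sD: "(\<Sum>m=1..n. D m) \<le> 1" using inv by simp
  have Dj: "D j \<ge> 1" using j by (auto simp: D_def)
  have "(\<Sum>m=1..n. D m) = D j + (\<Sum>m\<in>{1..n}-{j}. D m)" using j(1) by (simp add: sum.remove)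
  then have Dj1: "D j = 1" and rest: "(\<Sum>m\<in>{1..n}-{j}. D m) = 0" using sD Dj by linarith+
  from rest have "\<forall>m\<in>{1..n}-{j}. D m = 0" by (metis finite_Diff finite_atLeastAtMost sum_eq_0_iff)
  then show ?thesis unfolding succ_code_def using D Dj1 by auto
qed

lemma smooth_facts:
  assumes "smooth P n M"
  shows "mallows_process P n M" "prob_space P"
    "\<And>\<omega> j s t. \<omega> \<in> space P \<Longrightarrow> j \<in> {1..n} \<Longrightarrow> 0 \<le> s \<Longrightarrow> s \<le> t \<Longrightarrow> Inv_j (M s \<omega>) j \<le> Inv_j (M t \<omega>) j"
    "\<And>\<omega> t \<sigma>. \<omega> \<in> space P \<Longrightarrow> t > 0 \<Longrightarrow> left_lim (\<lambda>u. M u \<omega>) t \<sigma> \<Longrightarrow> Inv n (M t \<omega>) \<le> Inv n \<sigma> + 1"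
    "\<And>\<omega> t. \<omega> \<in> space P \<Longrightarrow> 0 \<le> t \<Longrightarrow> M t \<omega> \<in> Sn n"
    "\<And>\<omega>. \<omega> \<in> space P \<Longrightarrow> cadlag (\<lambda>t. M t \<omega>)"
  using assms unfolding smooth_def strongly_monotone_def mallows_process_def by blast+

lemma jump_step:
  assumes sm: "smooth P n M" and \<omega>: "\<omega> \<in> space P" and u: "0 \<le> u" "u < t"
    and ll: "left_lim (\<lambda>u. M u \<omega>) t (M u \<omega>)"
  shows "M u \<omega> \<in> Sn n" "M t \<omega> \<in> Sn n" "\<forall>m\<in>{1..n}. Inv_j (M u \<omega>) m \<le> Inv_j (M t \<omega>) m"
    "Inv n (M t \<omega>) \<le> Inv n (M u \<omega>) + 1"
  using smooth_facts[OF sm] \<omega> u ll by auto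

lemma hyper_sym: "(\<sigma>, \<sigma>') \<in> hypercube n \<Longrightarrow> (\<sigma>', \<sigma>) \<in> hypercube n"
  unfolding hypercube_def by (auto simp: abs_minus_commute)

lemma one_way:
  assumes sm: "smooth P n M" and J: "jump_event P M \<sigma> \<sigma>'" and ne: "\<sigma> \<noteq> \<sigma>'"
  shows "(\<sigma>, \<sigma>') \<in> hypercube n"
proof -
  obtain \<omega> t where \<omega>: "\<omega> \<in> space P" "t > 0" "left_lim (\<lambda>u. M u \<omega>) t \<sigma>" "M t \<omega> = \<sigma>'"
    using jump_exists[OF J] by auto
  obtain u where u: "0 < u" "u < t" "M u \<omega> = \<sigma>" using left_lim_point[OF \<omega>(3,2)] by auto
  note js = jump_step[OF sm \<omega>(1), of u t]
  have s: "\<sigma> \<in> Sn n" "\<sigma>' \<in> Sn n" and mono: "\<forall>m\<in>{1..n}. Inv_j \<sigma> m \<le> Inv_j \<sigma>' m"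
    and inv: "Inv n \<sigma>' \<le> Inv n \<sigma> + 1"
    using js u \<omega> by auto
  have "\<exists>j\<in>{1..n}. Inv_j \<sigma> j \<noteq> Inv_j \<sigma>' j"
  proof (rule ccontr)
    assume "\<not> ?thesis"
    then have "\<sigma> = \<sigma>'" using s by (intro code_inj[of \<sigma> n \<sigma>']) (auto simp: Sn_def)
    with ne show False ..
  qed
  then obtain j where j: "j \<in> {1..n}" "Inv_j \<sigma> j < Inv_j \<sigma>' j" using mono by force
  have "succ_code n \<sigma> \<sigma>' j" by (rule mono_succ[OF mono inv j])
  then show ?thesis using hyper_iff[OF s] j by auto
qed

lemma tg_hyper:
  assumes sm: "smooth P n M" shows "trans_graph P M \<subseteq> hypercube n"
  using one_way[OF sm] hyper_sym unfolding trans_graph_def by blast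

lemma generator_mono: "E \<subseteq> F \<Longrightarrow> generator E \<subseteq> generator F"
  unfolding generator_def by blast

lemma Inv_j_id: "Inv_j id m = 0" unfolding Inv_j_def by simp

lemma adj_in:
  assumes sm: "smooth P n M" and i: "1 \<le> i" "i + 1 \<le> n"
  shows "Transposition.transpose i (i+1) \<in> generator (trans_graph P M)"
proof (rule ccontr)
  define \<tau> where "\<tau> = Transposition.transpose i (i+1)"
  assume nin: "Transposition.transpose i (i+1) \<notin> generator (trans_graph P M)"
  note sf = smooth_facts[OF sm]
  interpret prob_space P by (rule sf(2))
  have \<tau>p: "\<tau> permutes {1..n}" unfolding \<tau>_def using i by (intro permutes_swap_id) auto
  have \<tau>S: "\<tau> \<in> Sn n" using \<tau>p by (simp add: Sn_def)
  have nj: "\<not> jump_event P M \<sigma> (\<sigma> \<circ> \<tau>)" if "\<sigma> \<in> Sn n" for \<sigma>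
  proof
    assume J: "jump_event P M \<sigma> (\<sigma> \<circ> \<tau>)"
    have p: "\<sigma> permutes {1..n}" using that by (simp add: Sn_def)
    have "(\<sigma> \<circ> \<tau>) (i+1) = \<sigma> i" unfolding \<tau>_def by simp
    then have "\<sigma> \<noteq> \<sigma> \<circ> \<tau>" using perm_inj[OF p, of i "i+1"] by force
    then have "(\<sigma>, \<sigma> \<circ> \<tau>) \<in> trans_graph P M" using J by (simp add: trans_graph_def)
    moreover have "\<tau> = inv \<sigma> \<circ> (\<sigma> \<circ> \<tau>)" using permutes_inv_o(2)[OF p] by (simp add: o_assoc)
    ultimately have "\<tau> \<in> generator (trans_graph P M)" unfolding generator_def by blast
    with nin show False unfolding \<tau>_def by simp
  qed
  have AE1: "AE \<omega> in P. \<forall>\<sigma>\<in>Sn n. \<not> (\<exists>t>0. left_lim (\<lambda>u. M u \<omega>) t \<sigma> \<and> M t \<omega> = \<sigma> \<circ> \<tau>)"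
    using nj unfolding jump_event_def by (intro AE_finite_allI finite_Sn) auto
  have "{\<rho>\<in>Sn n. \<rho> = id} = {id}" using id_Sn by auto
  then have "prob {\<omega>\<in>space P. M 0 \<omega> = id} = 1"
    using mp_event[OF sf(1), of 0 "\<lambda>\<rho>. \<rho> = id"] mallows_0_id by simp
  then have AE2: "AE \<omega> in P. \<omega> \<in> {\<omega>\<in>space P. M 0 \<omega> = id}" by (rule AE_prob_1)
  have tc: "Inv_j \<tau> m = (if m = i + 1 then 1 else 0)" for m
    using swap_code[of id n i "i+1" m] i Inv_j_id unfolding \<tau>_def by simp
  have AE3: "AE \<omega> in P. M 1 \<omega> \<noteq> \<tau>"
    using AE1 AE2
  proof eventually_elim
    case (elim \<omega>)
    then have \<omega>: "\<omega> \<in> space P" "M 0 \<omega> = id" by auto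
    show "M 1 \<omega> \<noteq> \<tau>"
    proof
      assume M1: "M 1 \<omega> = \<tau>"
      have "\<exists>s u. 0 \<le> u \<and> u < s \<and> s \<le> 1 \<and> left_lim (\<lambda>u. M u \<omega>) s (M u \<omega>) \<and>
          Inv_j (M u \<omega>) (i+1) \<le> 0 \<and> 0 < Inv_j (M s \<omega>) (i+1)"
        by (rule crossing[where g = "\<lambda>\<rho>. Inv_j \<rho> (i+1)"]) (use sf(6)[OF \<omega>(1)] \<omega> M1 tc Inv_j_id in auto)
      then obtain s u where su: "0 \<le> u" "u < s" "s \<le> 1" "left_lim (\<lambda>u. M u \<omega>) s (M u \<omega>)"
          "Inv_j (M u \<omega>) (i+1) = 0" "0 < Inv_j (M s \<omega>) (i+1)" by auto
      define \<sigma>0 where "\<sigma>0 = M u \<omega>"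
      define \<sigma>1 where "\<sigma>1 = M s \<omega>"
      note js = jump_step[OF sm \<omega>(1) su(1,2,4)]
      have p0: "\<sigma>0 permutes {1..n}" and p1: "\<sigma>1 permutes {1..n}"
        using js by (auto simp: Sn_def \<sigma>0_def \<sigma>1_def)
      have i1: "i + 1 \<in> {1..n}" using i by auto
      have sc: "succ_code n \<sigma>0 \<sigma>1 (i+1)"
        using mono_succ[OF js(3,4) i1] su(5,6) unfolding \<sigma>0_def \<sigma>1_def by simp
      have "Inv_j \<sigma>0 i \<le> Inv_j (M 1 \<omega>) i" unfolding \<sigma>0_def
        using su i by (intro sf(3)[OF \<omega>(1)]) auto
      then have c0i: "Inv_j \<sigma>0 i = 0" using M1 tc by simp
      have e1: "{k\<in>{1..<i+1}. \<sigma>0 k > \<sigma>0 (i+1)} = {}"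
        using su(5) unfolding \<sigma>0_def[symmetric] Inv_j_def by simp
      have e2: "{k\<in>{1..<i}. \<sigma>0 k > \<sigma>0 i} = {}"
        using c0i unfolding Inv_j_def by simp
      have "\<sigma>0 i \<noteq> \<sigma>0 (i+1)" using perm_inj[OF p0, of i "i+1"] by simp
      then have lt: "\<sigma>0 i < \<sigma>0 (i+1)" using e1 i by auto
      have nb: "\<not> (\<sigma>0 i < \<sigma>0 k \<and> \<sigma>0 k < \<sigma>0 (i+1))" if "1 \<le> k" "k < i+1" "k \<noteq> i" for k
        using e2 that by auto
      note sw = swap_code[OF p0 i(1) _ i(2) lt nb]
      have p2: "\<sigma>0 \<circ> \<tau> permutes {1..n}" using p0 \<tau>p by (simp add: permutes_compose)
      have "\<sigma>1 = \<sigma>0 \<circ> \<tau>"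
        by (rule code_inj[OF p1 p2]) (use sc sw in \<open>auto simp: succ_code_def \<tau>_def\<close>)
      moreover have "s > 0" using su by simp
      moreover have "\<sigma>0 \<in> Sn n" using p0 by (simp add: Sn_def)
      ultimately show False using elim su(4) unfolding \<sigma>0_def \<sigma>1_def by blast
    qed
  qed
  have "{\<rho>\<in>Sn n. \<rho> = \<tau>} = {\<tau>}" using \<tau>S by auto
  then have ev: "{\<omega>\<in>space P. M 1 \<omega> = \<tau>} \<in> sets P" "measure P {\<omega>\<in>space P. M 1 \<omega> = \<tau>} = mallows n 1 \<tau>"
    using mp_event[OF sf(1), of 1 "\<lambda>\<rho>. \<rho> = \<tau>"] \<tau>S by auto
  have "emeasure P {\<omega>\<in>space P. M 1 \<omega> = \<tau>} = 0"
    using AE3 by (subst (asm) AE_iff_measurable[OF ev(1)]) auto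
  then have "measure P {\<omega>\<in>space P. M 1 \<omega> = \<tau>} = 0" by (simp add: measure_def)
  with ev(2) mallows_pos[of 1 n \<tau>] show False by simp
qed



lemma meas_B:
  assumes "a \<in> I" "b \<in> I"
  shows "{f \<in> space (PiM I (\<lambda>t. count_space (UNIV::nat set))). Q (f a) (f b)} \<in> sets (PiM I (\<lambda>t. count_space UNIV))"
proof -
  have "(\<lambda>f. (f a, f b)) \<in> measurable (PiM I (\<lambda>_. count_space (UNIV::nat set))) (count_space UNIV \<Otimes>\<^sub>M count_space UNIV)"
    by (intro measurable_Pair measurable_component_singleton assms)
  then have "(\<lambda>f. (f a, f b)) \<in> measurable (PiM I (\<lambda>_. count_space (UNIV::nat set))) (count_space (UNIV::(nat\<times>nat) set))"
    by (simp add: pair_measure_countable)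
  then have "(\<lambda>f. (f a, f b)) -` {p. Q (fst p) (snd p)} \<inter> space (PiM I (\<lambda>_. count_space (UNIV::nat set))) \<in> sets (PiM I (\<lambda>t. count_space UNIV))"
    by (rule measurable_sets) simp
  moreover have "(\<lambda>f. (f a, f b)) -` {p. Q (fst p) (snd p)} \<inter> space (PiM I (\<lambda>_. count_space (UNIV::nat set))) =
     {f \<in> space (PiM I (\<lambda>t. count_space (UNIV::nat set))). Q (f a) (f b)}" by auto
  ultimately show ?thesis by simp
qed

lemma Phi_split:
  assumes "\<And>\<rho>. Q \<rho> \<longleftrightarrow> Q1 \<rho> \<or> Q2 \<rho>" "\<And>\<rho>. \<not> (Q1 \<rho> \<and> Q2 \<rho>)"
  shows "(\<Sum>\<rho>\<in>{\<rho>\<in>Sn n. Q \<rho>}. g \<rho>) = (\<Sum>\<rho>\<in>{\<rho>\<in>Sn n. Q1 \<rho>}. g \<rho>) + (\<Sum>\<rho>\<in>{\<rho>\<in>Sn n. Q2 \<rho>}. g \<rho>)"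
proof -
  have "{\<rho>\<in>Sn n. Q \<rho>} = {\<rho>\<in>Sn n. Q1 \<rho>} \<union> {\<rho>\<in>Sn n. Q2 \<rho>}" using assms by auto
  moreover have "finite {\<rho>\<in>Sn n. Q1 \<rho>}" "finite {\<rho>\<in>Sn n. Q2 \<rho>}" using finite_Sn by auto
  ultimately show ?thesis using assms(2) by (simp add: sum.union_disjoint disjoint_iff)
qed

lemma Phi_lower:
  assumes "Q \<rho>" "\<rho> \<in> Sn n" "0 \<le> t"
  shows "mallows n t \<rho> \<le> (\<Sum>\<rho>\<in>{\<rho>\<in>Sn n. Q \<rho>}. mallows n t \<rho>)"
  using assms finite_Sn mallows_nonneg by (intro member_le_sum) auto

lemma Phi_cont: "continuous_on {0..} (\<lambda>t. \<Sum>\<rho>\<in>{\<rho>\<in>Sn n. Q \<rho>}. mallows n t \<rho>)"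
proof -
  have dnz: "\<forall>x\<in>{0..}. (\<Prod>k=1..n. \<Sum>l<k. x^l) \<noteq> (0::real)" 
  proof
    fix x :: real assume "x \<in> {0..}"
    then have "0 \<le> x" by simp
    from denom_pos[OF this, of n] show "(\<Prod>k=1..n. \<Sum>l<k. x^l) \<noteq> 0" by linarith
  qed
  show ?thesis unfolding mallows_def by (intro continuous_intros) (use dnz in auto)
qed

lemma jump_pos:
  assumes reg: "regular P n M" and s: "\<sigma> \<in> Sn n" "\<sigma>' \<in> Sn n" and j: "j \<in> {1..n}"
    and sc: "succ_code n \<sigma> \<sigma>' j"
  shows "jump_event P M \<sigma> \<sigma>'"
proof (rule ccontr)
  assume nJ: "\<not> jump_event P M \<sigma> \<sigma>'"
  then have AEn: "AE \<omega> in P. \<not> (\<exists>t>0. left_lim (\<lambda>u. M u \<omega>) t \<sigma> \<and> M t \<omega> = \<sigma>')"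
    unfolding jump_event_def by simp
  have sm: "smooth P n M" using reg by (simp add: regular_def)
  note sf = smooth_facts[OF sm]
  interpret prob_space P by (rule sf(2))
  have ind: "indep_vars (\<lambda>j. PiM {0..} (\<lambda>t. count_space UNIV)) (\<lambda>j \<omega>. restrict (\<lambda>t. Inv_j (M t \<omega>) j) {0..}) {1..n}"
    using reg by (simp add: regular_def)
  define c where "c = Inv_j \<sigma> j"
  have cj': "Inv_j \<sigma>' j = c + 1" using sc j by (simp add: succ_code_def c_def)
  have oth: "\<And>m. m \<in> {1..n} \<Longrightarrow> m \<noteq> j \<Longrightarrow> Inv_j \<sigma>' m = Inv_j \<sigma> m" using sc by (simp add: succ_code_def)
  define \<Phi> where "\<Phi> Q t = (\<Sum>\<rho>\<in>{\<rho>\<in>Sn n. Q \<rho>}. mallows n t \<rho>)" for Q and t :: real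
  have ME: "{\<omega>\<in>space P. Q (M t \<omega>)} \<in> sets P" "prob {\<omega>\<in>space P. Q (M t \<omega>)} = \<Phi> Q t" if "0 \<le> t" for Q t
    using mp_event[OF sf(1) that, of Q] by (simp_all add: \<Phi>_def)
  have cont: "continuous_on {0..} (\<Phi> Q)" for Q unfolding \<Phi>_def by (rule Phi_cont)
  have tend: "(\<Phi> Q \<longlongrightarrow> \<Phi> Q t) (at t within {0..})" if "0 \<le> t" for Q t
    using cont[of Q] that unfolding continuous_on_def by simp
  have split: "\<Phi> Q t = \<Phi> Q1 t + \<Phi> Q2 t" if "\<And>\<rho>. Q \<rho> \<longleftrightarrow> Q1 \<rho> \<or> Q2 \<rho>" "\<And>\<rho>. \<not> (Q1 \<rho> \<and> Q2 \<rho>)" for Q Q1 Q2 t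
    unfolding \<Phi>_def by (rule Phi_split) (use that in auto)
  have lower: "mallows n t \<rho> \<le> \<Phi> Q t" if "Q \<rho>" "\<rho> \<in> Sn n" "0 \<le> t" for Q \<rho> t
    unfolding \<Phi>_def using that by (rule Phi_lower)
  define F where "F = \<Phi> (\<lambda>\<rho>. Inv_j \<rho> j \<le> c)"
  have F0: "1 \<le> F 0" using lower[of "\<lambda>\<rho>. Inv_j \<rho> j \<le> c" id 0] id_Sn mallows_0_id Inv_j_id
    by (simp add: F_def)
  have "\<Phi> (\<lambda>_. True) 1 = 1" using ME(2)[of 1 "\<lambda>_. True"] prob_space by simp
  moreover have "\<Phi> (\<lambda>_. True) 1 = F 1 + \<Phi> (\<lambda>\<rho>. \<not> Inv_j \<rho> j \<le> c) 1"
    unfolding F_def by (rule split) auto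
  moreover have "mallows n 1 \<sigma>' \<le> \<Phi> (\<lambda>\<rho>. \<not> Inv_j \<rho> j \<le> c) 1" using cj' s by (intro lower) auto
  moreover have "0 < mallows n 1 \<sigma>'" by (rule mallows_pos) simp
  ultimately have F1: "F 1 < F 0" using F0 by linarith
  have "eventually (\<lambda>t. F 1 < F t) (at 0 within {0..})"
    using order_tendstoD(1)[OF tend[of 0 "\<lambda>\<rho>. Inv_j \<rho> j \<le> c"] F1[unfolded F_def]] by (simp add: F_def)
  then obtain d where d: "d > 0" "\<And>x. x \<in> {0..} \<Longrightarrow> x \<noteq> 0 \<Longrightarrow> dist x 0 < d \<Longrightarrow> F 1 < F x"
    unfolding eventually_at by blast
  define a0 where "a0 = min (d/2) (1/2)"
  have a0: "0 < a0" "a0 < 1" "F 1 < F a0" using d by (auto simp: a0_def dist_real_def intro!: d(2))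
  define S where "S = {t\<in>{a0..1}. F a0 \<le> F t}"
  have contF: "continuous_on {a0..1} F"
    unfolding F_def by (rule continuous_on_subset[OF cont]) (use a0 in auto)
  have "closed S" unfolding S_def
    by (rule continuous_on_closed_Collect_le[OF continuous_on_const contF]) simp
  moreover have "a0 \<in> S" using a0 by (simp add: S_def)
  moreover have bddS: "bdd_above S" unfolding S_def bdd_above_def by auto
  ultimately have aS: "Sup S \<in> S" by (intro closed_contains_Sup) auto
  define a where "a = Sup S"
  have aprops: "a0 \<le> a" "a \<le> 1" "F a0 \<le> F a" using aS by (auto simp: S_def a_def)
  have a1: "a < 1" using aprops a0 by (metis order.not_eq_order_implies_strict order_less_le_trans order_less_irrefl)
  have apos: "0 < a" using aprops a0 by simp
  have Fb: "F b < F a" if "a < b" "b \<le> 1" for b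
  proof -
    have "b \<notin> S" using cSup_upper[OF _ bddS, of b] that by (auto simp: a_def)
    then show ?thesis using that aprops unfolding S_def by auto
  qed
  define K where "K = {1..n} - {j}"
  define v where "v k = Inv_j \<sigma> k" for k
  define Le where "Le k = \<Phi> (\<lambda>\<rho>. Inv_j \<rho> k \<le> v k)" for k
  define Lt where "Lt k = \<Phi> (\<lambda>\<rho>. Inv_j \<rho> k < v k)" for k
  have gap: "Lt k a < Le k a" for k
  proof -
    have "Le k a = Lt k a + \<Phi> (\<lambda>\<rho>. Inv_j \<rho> k = v k) a"
      unfolding Le_def Lt_def by (rule split) auto
    moreover have "mallows n a \<sigma> \<le> \<Phi> (\<lambda>\<rho>. Inv_j \<rho> k = v k) a" using s apos by (intro lower) (auto simp: v_def)
    moreover have "0 < mallows n a \<sigma>" using apos by (rule mallows_pos)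
    ultimately show ?thesis by linarith
  qed
  have "eventually (\<lambda>b. \<forall>k\<in>K. Lt k a < Le k b) (at a within {0..})"
  proof (rule eventually_ball_finite)
    show "finite K" by (simp add: K_def)
    show "\<forall>k\<in>K. eventually (\<lambda>b. Lt k a < Le k b) (at a within {0..})"
    proof
      fix k assume "k \<in> K"
      have "(Le k \<longlongrightarrow> Le k a) (at a within {0..})" unfolding Le_def by (rule tend) (use apos in simp)
      from order_tendstoD(1)[OF this gap[of k]] show "eventually (\<lambda>b. Lt k a < Le k b) (at a within {0..})" .
    qed
  qed
  then obtain d1 where d1: "d1 > 0" "\<And>x. x \<in> {0..} \<Longrightarrow> x \<noteq> a \<Longrightarrow> dist x a < d1 \<Longrightarrow> \<forall>k\<in>K. Lt k a < Le k x"
    unfolding eventually_at by blast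
  define b where "b = a + min d1 (1 - a) / 2"
  have "min d1 (1 - a) \<le> 1 - a" "0 < min d1 (1 - a)" using d1(1) a1 by auto
  then have b: "a < b" "b \<le> 1" unfolding b_def by (simp_all add: field_simps)
  have bK: "\<forall>k\<in>K. Lt k a < Le k b" using d1 b apos by (intro d1(2)) (auto simp: b_def dist_real_def)
  have Fab: "F b < F a" using Fb b by simp
  have a0': "0 \<le> a" "0 \<le> b" using apos b by auto
  define A where "A k = (if k = j then {\<omega>\<in>space P. Inv_j (M a \<omega>) j \<le> c \<and> c < Inv_j (M b \<omega>) j}
                         else {\<omega>\<in>space P. Inv_j (M a \<omega>) k = v k \<and> Inv_j (M b \<omega>) k = v k})" for k
  have Asets: "A k \<in> sets P" for k
  proof -
    have "{\<omega>\<in>space P. Inv_j (M a \<omega>) k \<le> c \<and> c < Inv_j (M b \<omega>) k} =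
          {\<omega>\<in>space P. Inv_j (M a \<omega>) k \<le> c} \<inter> {\<omega>\<in>space P. c < Inv_j (M b \<omega>) k}" by auto
    moreover have "{\<omega>\<in>space P. Inv_j (M a \<omega>) k = v k \<and> Inv_j (M b \<omega>) k = v k} =
          {\<omega>\<in>space P. Inv_j (M a \<omega>) k = v k} \<inter> {\<omega>\<in>space P. Inv_j (M b \<omega>) k = v k}" by auto
    ultimately show ?thesis unfolding A_def using ME(1) a0' by auto
  qed
  have monoP: "Inv_j (M s \<omega>) k \<le> Inv_j (M t \<omega>) k" if "\<omega> \<in> space P" "k \<in> {1..n}" "0 \<le> s" "s \<le> t" for \<omega> k s t
    using sf(3) that by blast
  have Apos: "0 < prob (A k)" if "k \<in> {1..n}" for k
  proof (cases "k = j")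
    case True
    have "{\<omega>\<in>space P. Inv_j (M a \<omega>) j \<le> c} \<subseteq> A j \<union> {\<omega>\<in>space P. Inv_j (M b \<omega>) j \<le> c}"
      by (auto simp: A_def)
    then have "prob {\<omega>\<in>space P. Inv_j (M a \<omega>) j \<le> c} \<le> prob (A j \<union> {\<omega>\<in>space P. Inv_j (M b \<omega>) j \<le> c})"
      using Asets ME(1) a0' by (intro finite_measure_mono) auto
    also have "\<dots> \<le> prob (A j) + prob {\<omega>\<in>space P. Inv_j (M b \<omega>) j \<le> c}"
      using Asets ME(1) a0' by (intro measure_Un_le) auto
    finally have "F a \<le> prob (A j) + F b"
      using ME(2)[of a "\<lambda>\<rho>. Inv_j \<rho> j \<le> c"] ME(2)[of b "\<lambda>\<rho>. Inv_j \<rho> j \<le> c"] a0'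
      unfolding F_def by simp
    then show ?thesis using Fab True by simp
  next
    case False
    then have kK: "k \<in> K" using that by (simp add: K_def)
    have "{\<omega>\<in>space P. Inv_j (M b \<omega>) k \<le> v k} \<subseteq> A k \<union> {\<omega>\<in>space P. Inv_j (M a \<omega>) k < v k}"
    proof
      fix \<omega> assume \<omega>: "\<omega> \<in> {\<omega>\<in>space P. Inv_j (M b \<omega>) k \<le> v k}"
      have "Inv_j (M a \<omega>) k \<le> Inv_j (M b \<omega>) k" using \<omega> that a0' b by (intro monoP) auto
      then show "\<omega> \<in> A k \<union> {\<omega>\<in>space P. Inv_j (M a \<omega>) k < v k}"
        using \<omega> False by (auto simp: A_def)
    qed
    then have "prob {\<omega>\<in>space P. Inv_j (M b \<omega>) k \<le> v k} \<le> prob (A k \<union> {\<omega>\<in>space P. Inv_j (M a \<omega>) k < v k})"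
      using Asets ME(1) a0' by (intro finite_measure_mono) auto
    also have "\<dots> \<le> prob (A k) + prob {\<omega>\<in>space P. Inv_j (M a \<omega>) k < v k}"
      using Asets ME(1) a0' by (intro measure_Un_le) auto
    finally have "Le k b \<le> prob (A k) + Lt k a"
      using ME(2)[of b "\<lambda>\<rho>. Inv_j \<rho> k \<le> v k"] ME(2)[of a "\<lambda>\<rho>. Inv_j \<rho> k < v k"] a0'
      unfolding Le_def Lt_def by simp
    then show ?thesis using bK kK by fastforce
  qed
  have "prob (\<Inter>k\<in>{1..n}. A k) = (\<Prod>k\<in>{1..n}. prob (A k))"
  proof -
    define X where "X = (\<lambda>j \<omega>. restrict (\<lambda>t. Inv_j (M t \<omega>) j) {0..})"
    define Fs where "Fs = (\<lambda>i. {X i -` B \<inter> space P | B. B \<in> sets (PiM {0::real..} (\<lambda>t. count_space (UNIV::nat set)))})"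
    have "indep_sets Fs {1..n}" using ind unfolding indep_vars_def2 Fs_def X_def by simp
    moreover have "A k \<in> Fs k" if "k \<in> {1..n}" for k
    proof -
      define B where "B = {f \<in> space (PiM {0::real..} (\<lambda>t. count_space (UNIV::nat set))).
         (if k = j then f a \<le> c \<and> c < f b else f a = v k \<and> f b = v k)}"
      have "B \<in> sets (PiM {0::real..} (\<lambda>t. count_space (UNIV::nat set)))"
        unfolding B_def using a0' by (intro meas_B) auto
      moreover have "X k -` B \<inter> space P = A k"
        using a0' by (auto simp: X_def B_def A_def space_PiM)
      ultimately show ?thesis unfolding Fs_def by blast
    qed
    ultimately show ?thesis using j by (intro indep_setsD) blast+
  qed
  also have "\<dots> > 0" using Apos by (intro prod_pos) auto
  finally have pos: "0 < prob (\<Inter>k\<in>{1..n}. A k)" .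
  from AEn obtain N where N: "{\<omega>\<in>space P. \<not> \<not> (\<exists>t>0. left_lim (\<lambda>u. M u \<omega>) t \<sigma> \<and> M t \<omega> = \<sigma>')} \<subseteq> N"
      "emeasure P N = 0" "N \<in> sets P" by (rule AE_E)
  have sub: "(\<Inter>k\<in>{1..n}. A k) \<subseteq> N"
  proof
    fix \<omega> assume \<omega>A: "\<omega> \<in> (\<Inter>k\<in>{1..n}. A k)"
    then have \<omega>A': "\<And>k. k \<in> {1..n} \<Longrightarrow> \<omega> \<in> A k" by blast
    have "\<omega> \<in> A j" using \<omega>A' j by blast
    then have \<omega>: "\<omega> \<in> space P" "Inv_j (M a \<omega>) j \<le> c" "c < Inv_j (M b \<omega>) j"
      unfolding A_def by simp_all
    have oK: "Inv_j (M a \<omega>) k = v k \<and> Inv_j (M b \<omega>) k = v k" if "k \<in> K" for k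
    proof -
      have "k \<in> {1..n}" "k \<noteq> j" using that by (auto simp: K_def)
      then show ?thesis using \<omega>A'[of k] unfolding A_def by simp
    qed
    have "\<exists>s u. a \<le> u \<and> u < s \<and> s \<le> b \<and> left_lim (\<lambda>u. M u \<omega>) s (M u \<omega>) \<and>
          Inv_j (M u \<omega>) j \<le> c \<and> c < Inv_j (M s \<omega>) j"
      by (rule crossing[where g = "\<lambda>\<rho>. Inv_j \<rho> j"]) (use sf(6)[OF \<omega>(1)] \<omega> a0' b in auto)
    then obtain s u where su: "a \<le> u" "u < s" "s \<le> b" "left_lim (\<lambda>u. M u \<omega>) s (M u \<omega>)"
        "Inv_j (M u \<omega>) j \<le> c" "c < Inv_j (M s \<omega>) j" by auto
    have u0: "0 \<le> u" using su a0' by simp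
    note js = jump_step[OF sm \<omega>(1) u0 su(2,4)]
    have sc0: "succ_code n (M u \<omega>) (M s \<omega>) j" using su(5,6) by (intro mono_succ[OF js(3,4) j]) simp
    then have "Inv_j (M s \<omega>) j = Inv_j (M u \<omega>) j + 1" using j by (simp add: succ_code_def)
    then have cu: "Inv_j (M u \<omega>) j = c" using su(5,6) by simp
    have vK: "Inv_j (M u \<omega>) k = v k" if "k \<in> K" for k
    proof -
      have k: "k \<in> {1..n}" using that by (simp add: K_def)
      have "Inv_j (M a \<omega>) k \<le> Inv_j (M u \<omega>) k" using su a0' k \<omega>(1) by (intro monoP) auto
      moreover have "Inv_j (M u \<omega>) k \<le> Inv_j (M b \<omega>) k" using su a0' k \<omega>(1) by (intro monoP) auto
      ultimately show ?thesis using oK[OF that] by simp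
    qed
    have p0: "M u \<omega> permutes {1..n}" "M s \<omega> permutes {1..n}" using js(1,2) by (auto simp: Sn_def)
    have ps: "\<sigma> permutes {1..n}" "\<sigma>' permutes {1..n}" using s by (auto simp: Sn_def)
    have e0: "M u \<omega> = \<sigma>"
    proof (rule code_inj[OF p0(1) ps(1)])
      fix m assume m: "m \<in> {1..n}"
      show "Inv_j (M u \<omega>) m = Inv_j \<sigma> m"
        using vK[of m] m cu by (cases "m = j") (auto simp: K_def v_def c_def)
    qed
    have e1: "M s \<omega> = \<sigma>'"
    proof (rule code_inj[OF p0(2) ps(2)])
      fix m assume m: "m \<in> {1..n}"
      have "Inv_j (M s \<omega>) m = (if m = j then Inv_j (M u \<omega>) m + 1 else Inv_j (M u \<omega>) m)"
        using sc0 m by (simp add: succ_code_def)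
      then show "Inv_j (M s \<omega>) m = Inv_j \<sigma>' m"
        using e0 m cj' oth[of m] by (cases "m = j") (auto simp: c_def)
    qed
    have "s > 0" using su u0 by simp
    then have "\<exists>t>0. left_lim (\<lambda>u. M u \<omega>) t \<sigma> \<and> M t \<omega> = \<sigma>'" using su(4) e0 e1 by auto
    then show "\<omega> \<in> N" using N(1) \<omega>(1) by auto
  qed
  have "emeasure P (\<Inter>k\<in>{1..n}. A k) \<le> emeasure P N" using sub N(3) by (rule emeasure_mono)
  then have "emeasure P (\<Inter>k\<in>{1..n}. A k) = 0" using N(2) by simp
  then have "prob (\<Inter>k\<in>{1..n}. A k) = 0" by (simp add: measure_def)
  with pos show False by simp
qed


theorem theorem2:
  fixes P :: "'a measure" and n :: nat and M :: "real \<Rightarrow> 'a \<Rightarrow> perm_n"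
  assumes "smooth P n M"
  shows "trans_graph P M \<subseteq> hypercube n \<and>
         adj_transpositions n \<subseteq> generator (trans_graph P M) \<and>
         generator (trans_graph P M) \<subseteq> transpositions n \<and>
         (regular P n M \<longrightarrow>
           trans_graph P M = hypercube n \<and>
           generator (trans_graph P M) = generator (hypercube n) \<and>
           generator (hypercube n) = transpositions n)"
proof -
  have A: "trans_graph P M \<subseteq> hypercube n" by (rule tg_hyper[OF assms])
  have B: "adj_transpositions n \<subseteq> generator (trans_graph P M)"
  proof
    fix t assume "t \<in> adj_transpositions n"
    then obtain i where "t = Transposition.transpose i (i+1)" "1 \<le> i" "i + 1 \<le> n"
      unfolding adj_transpositions_def by auto
    then show "t \<in> generator (trans_graph P M)" using adj_in[OF assms] by simp
  qed
  have C: "generator (trans_graph P M) \<subseteq> transpositions n"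
    using generator_mono[OF A] gen_hyper[of n] by simp
  have D: "trans_graph P M = hypercube n" if reg: "regular P n M"
  proof
    show "hypercube n \<subseteq> trans_graph P M"
    proof
      fix e assume e: "e \<in> hypercube n"
      obtain \<sigma> \<sigma>' where ee: "e = (\<sigma>, \<sigma>')" by (cases e)
      have s: "\<sigma> \<in> Sn n" "\<sigma>' \<in> Sn n" using e ee by (auto simp: hypercube_def)
      obtain j where j: "j \<in> {1..n}" and sc: "succ_code n \<sigma> \<sigma>' j \<or> succ_code n \<sigma>' \<sigma> j"
        using hyper_iff[OF s] e ee by auto
      from sc show "e \<in> trans_graph P M"
      proof
        assume sc1: "succ_code n \<sigma> \<sigma>' j"
        have "Inv_j \<sigma>' j = Inv_j \<sigma> j + 1" using sc1 j by (simp add: succ_code_def)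
        then have "\<sigma> \<noteq> \<sigma>'" by auto
        then show ?thesis using jump_pos[OF reg s j sc1] ee by (simp add: trans_graph_def)
      next
        assume sc1: "succ_code n \<sigma>' \<sigma> j"
        have "Inv_j \<sigma> j = Inv_j \<sigma>' j + 1" using sc1 j by (simp add: succ_code_def)
        then have "\<sigma> \<noteq> \<sigma>'" by auto
        then show ?thesis using jump_pos[OF reg s(2,1) j sc1] ee by (simp add: trans_graph_def)
      qed
    qed
  qed (rule A)
  show ?thesis using A B C D gen_hyper[of n] by simp
qed

end
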